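(* Let $(X,\mu)$ be a non-atomic probability measure space equipped with a tree $\mathcal{T}$, with associated dyadic maximal operator $\mathcal{M}_{\mathcal{T}}$. Let $0<q<1$, let $f,h$ satisfy $0<h\le f^q$, and let $\phi_n:X\to\mathbb{R}^+$ ($n\in\mathbb{N}$) be measurable functions with $\int_X\phi_n\,d\mu=f$ and $\int_X\phi_n^q\,d\mu=h$ for every $n$. Let $c=\omega_q(f^q/h)^{1/q}$. Then the following are equivalent: (i) $\lim_n\int_X(\mathcal{M}_{\mathcal{T}}\phi_n)^q\,d\mu=h\,\omega_q(f^q/h)$; (ii) $\lim_n\int_X|\mathcal{M}_{\mathcal{T}}\phi_n-c\,\phi_n|^q\,d\mu=0$.
   Context: A set $\mathcal{T}$ of measurable subsets of $X$ is a tree if: (i) $X\in\mathcal{T}$ and $\mu(I)>0$ for every $I\in\mathcal{T}$; (ii) for every $I\in\mathcal{T}$ there is a finite or countable set $C(I)\subseteq\mathcal{T}$ with at least two elements, consisting of pairwise disjoint subsets of $I$ whose union is $I$; (iii) $\mathcal{T}=\bigcup_{m\ge0}\mathcal{T}_{(m)}$ where $\mathcal{T}_{(0)}=\{X\}$ and $\mathcal{T}_{(m+1)}=\bigcup_{I\in\mathcal{T}_{(m)}}C(I)$; (iv) $\lim_{m\to\infty}\sup_{I\in\mathcal{T}_{(m)}}\mu(I)=0$. The dyadic maximal operator is $\mathcal{M}_{\mathcal{T}}\phi(x)=\sup\{\frac{1}{\mu(I)}\int_I|\phi|\,d\mu : x\in I\in\mathcal{T}\}$. Here $\omega_q(z)=[H_q^{-1}(z)]^q$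 for $z\ge1$, where $H_q(z)=(1-q)z^q+qz^{q-1}$ on $[1,\infty)$ (a strictly increasing bijection onto $[1,\infty)$). *)

theory Defs
  imports "HOL-Probability.Probability"
begin

definition non_atomic :: "'a measure \<Rightarrow> bool" where
  "non_atomic M \<longleftrightarrow> (\<forall>A\<in>sets M. 0 < measure M A \<longrightarrow>
      (\<exists>B\<in>sets M. B \<subseteq> A \<and> 0 < measure M B \<and> measure M B < measure M A))"

definition tree_level :: "'a measure \<Rightarrow> ('a set \<Rightarrow> 'a set set) \<Rightarrow> nat \<Rightarrow> 'a set set" where
  "tree_level M C m = ((\<lambda>S. \<Union>I\<in>S. C I) ^^ m) {space M}"

definition is_tree :: "'a measure \<Rightarrow> 'a set set \<Rightarrow> bool" where
  "is_tree M T \<longleftrightarrow> T \<subseteq> sets M \<and> space M \<in> T \<and> (\<forall>I\<in>T. 0 < measure M I) \<and>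
    (\<exists>C. (\<forall>I\<in>T. C I \<subseteq> T \<and> countable (C I) \<and> (\<exists>J\<in>C I. \<exists>K\<in>C I. J \<noteq> K) \<and>
              disjoint (C I) \<and> \<Union>(C I) = I) \<and>
         T = (\<Union>m. tree_level M C m) \<and>
         (\<lambda>m. SUP I\<in>tree_level M C m. measure M I) \<longlonglongrightarrow> 0)"

definition dyadic_max :: "'a measure \<Rightarrow> 'a set set \<Rightarrow> ('a \<Rightarrow> real) \<Rightarrow> 'a \<Rightarrow> ennreal" where
  "dyadic_max M T \<phi> x = (SUP I\<in>{I\<in>T. x \<in> I}. (\<integral>\<^sup>+ y\<in>I. ennreal \<bar>\<phi> y\<bar> \<partial>M) / emeasure M I)"

definition epowr :: "ennreal \<Rightarrow> real \<Rightarrow> ennreal" where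
  "epowr t q = (if t = \<infinity> then \<infinity> else ennreal (enn2real t powr q))"

definition H_fun :: "real \<Rightarrow> real \<Rightarrow> real" where
  "H_fun q z = (1 - q) * z powr q + q * z powr (q - 1)"

definition H_inv :: "real \<Rightarrow> real \<Rightarrow> real" where
  "H_inv q z = (THE y. 1 \<le> y \<and> H_fun q y = z)"

definition omega :: "real \<Rightarrow> real \<Rightarrow> real" where
  "omega q z = (H_inv q z) powr q"

end

theory Submission
  imports Defs
begin

lemma young_q:
  fixes q a b :: real
  assumes "0 < q" "q < 1" "0 \<le> a" "0 \<le> b"
  shows "a powr q * b powr (1-q) \<le> q*a + (1-q)*b"
proof (cases "a = 0 \<or> b = 0")
  case True then show ?thesis using assms by auto
next
  case False then show ?thesis using assms Youngs_inequality_0[of q "1-q" a b] by auto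
qed

lemma tangent_q:
  fixes q r s :: real
  assumes "0 < q" "q < 1" "0 \<le> r" "0 < s"
  shows "r powr q \<le> (1-q)* s powr q + q*r* s powr (q-1)"
proof -
  have "r powr q * s powr (1-q) \<le> q*r + (1-q)* s" using young_q assms by auto
  hence "r powr q * s powr (1-q) * s powr (q-1) \<le> (q*r + (1-q)* s) * s powr (q-1)"
    by (rule mult_right_mono) simp
  moreover have "s powr (1-q) * s powr (q-1) = 1"
    using assms by (simp flip: powr_add)
  moreover have "s * s powr (q-1) = s powr q"
    using assms powr_add[of s 1 "q-1"] by simp
  ultimately show ?thesis by (simp add: algebra_simps)
qed

lemma pw_max:
  fixes q L a :: real
  assumes "0 < q" "q < 1" "0 < L" "0 \<le> a"
  shows "(1-q)*max L a powr q + q*a*max L a powr (q-1) \<le> (1-q)*L powr q + q*a*L powr (q-1)"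
proof (cases "a \<le> L")
  case True then show ?thesis by simp
next
  case False
  hence "max L a = a" "a > 0" using assms by auto
  moreover have "a * a powr (q-1) = a powr q"
    using \<open>a>0\<close> powr_add[of a 1 "q-1"] by simp
  ultimately have "(1-q)*max L a powr q + q*a*max L a powr (q-1) = a powr q"
    by (simp add: algebra_simps)
  then show ?thesis using tangent_q[OF assms(1,2,4,3)] by simp
qed

lemma subadd_q:
  fixes q s t :: real
  assumes "0 < q" "q \<le> 1" "0 \<le> s" "0 \<le> t"
  shows "(s+t) powr q \<le> s powr q + t powr q"
proof (cases "s + t = 0")
  case True then show ?thesis using assms by auto
next
  case False
  hence p: "s + t > 0" using assms by auto
  have k: "x powr q \<ge> x" if "0 \<le> x" "x \<le> 1" for x :: real
    using powr_mono'[of q 1 x] that assms by simp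
  have "s powr q = (s+t) powr q * (s/(s+t)) powr q" using p assms
    by (simp add: powr_divide)
  also have "\<dots> \<ge> (s+t) powr q * (s/(s+t))"
    using k[of "s/(s+t)"] p assms by (intro mult_left_mono) auto
  finally have 1: "s powr q \<ge> (s+t) powr q * (s/(s+t))" .
  have "t powr q = (s+t) powr q * (t/(s+t))  powr q" using p assms
    by (simp add: powr_divide)
  also have "\<dots> \<ge> (s+t) powr q * (t/(s+t))"
    using k[of "t/(s+t)"] p assms by (intro mult_left_mono) auto
  finally have 2: "t powr q \<ge> (s+t) powr q * (t/(s+t))" .
  have "(s+t) powr q * (s/(s+t)) + (s+t) powr q * (t/(s+t)) = (s+t) powr q"
    using p by (simp flip: distrib_left add_divide_distrib)
  then show ?thesis using 1 2 by linarith
qed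

lemma absdiff_q:
  fixes q a b :: real
  assumes "0 < q" "q \<le> 1" "0 \<le> a" "0 \<le> b"
  shows "\<bar>a powr q - b powr q\<bar> \<le> \<bar>a - b\<bar> powr q"
proof (cases "b \<le> a")
  case True
  have "a powr q \<le> b powr q + (a-b) powr q" using subadd_q[of q b "a-b"] assms True by simp
  moreover have "b powr q \<le> a powr q" using True assms powr_mono2 by auto
  ultimately show ?thesis using True by auto
next
  case False
  have "b powr q \<le> a powr q + (b-a) powr q" using subadd_q[of q a "b-a"] assms False by simp
  moreover have "a powr q \<le> b powr q" using False assms powr_mono2 by auto
  ultimately show ?thesis using False by auto
qed


lemma g_nonneg:
  fixes q r :: real
  assumes "0 < q" "q < 1" "0 \<le> r"
  shows "0 \<le> 1 - q + q*r - r powr q"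
  using tangent_q[OF assms(1,2,3), of 1] by simp

lemma tangent_g:
  fixes q r s :: real
  assumes "0 < q" "q < 1" "0 \<le> r" "0 < s"
  shows "1 - q + q*r - r powr q \<ge> (1 - q + q* s - s powr q) + q*(1 - s powr (q-1))*(r - s)"
proof -
  have "s * s powr (q-1) = s powr q"
    using assms powr_add[of s 1 "q-1"] by simp
  then show ?thesis using tangent_q[OF assms] by (simp add: algebra_simps)
qed

lemma stab_q:
  fixes q \<delta> :: real
  assumes q: "0 < q" "q < 1" and d: "0 < \<delta>" "\<delta> < 1"
  shows "\<exists>\<kappa>>0. \<forall>r\<ge>0. \<bar>1-r\<bar> powr q \<le> \<delta> powr q + (1 - q + q*r - r powr q)/\<kappa>"
proof -
  define s1 where "s1 = 1 + \<delta>/2"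
  define s2 where "s2 = 1 - \<delta>/2"
  define \<beta>1 where "\<beta>1 = q*(1 - s1 powr (q-1))"
  define \<beta>2 where "\<beta>2 = q*(s2 powr (q-1) - 1)"
  have s1: "s1 > 1" using d by (simp add: s1_def)
  have s2: "0 < s2" "s2 < 1" using d by (auto simp: s2_def)
  have b1: "\<beta>1 > 0" unfolding \<beta>1_def using powr_less_one[OF s1, of "q-1"] q by simp
  have "s2 powr (q-1) > 1"
  proof -
    have "(1/s2) powr (1-q) > 1" using s2 q by (intro gr_one_powr) auto
    moreover have "(1/s2) powr (1-q) = s2 powr (q-1)" using s2
      by (simp add: powr_divide powr_minus_divide[symmetric] flip: powr_minus)
    ultimately show ?thesis by simp
  qed
  hence b2: "\<beta>2 > 0" unfolding \<beta>2_def using q by simp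
  define \<kappa>1 where "\<kappa>1 = \<beta>1 * \<delta> powr (1-q) / 2"
  define \<kappa>2 where "\<kappa>2 = \<beta>2 * \<delta> / 2"
  define \<kappa> where "\<kappa> = min \<kappa>1 \<kappa>2"
  have k1: "\<kappa>1 > 0" using b1 d by (simp add: \<kappa>1_def)
  have k2: "\<kappa>2 > 0" using b2 d by (simp add: \<kappa>2_def)
  have k: "\<kappa> > 0" using k1 k2 by (simp add: \<kappa>_def)
  show ?thesis
  proof (intro exI[of _ \<kappa>] conjI allI impI k)
    fix r :: real assume r: "0 \<le> r"
    define g where "g = 1 - q + q*r - r powr q"
    have g0: "g \<ge> 0" using g_nonneg[OF q r] by (simp add: g_def)
    have gk: "g / \<kappa> \<ge> 0" using g0 k by simp
    consider "\<bar>1-r\<bar> < \<delta>" | "r \<ge> 1 + \<delta>" | "r \<le> 1 - \<delta>" by linarith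
    then show "\<bar>1-r\<bar> powr q \<le> \<delta> powr q + g / \<kappa>"
    proof cases
      case 1
      then have "\<bar>1-r\<bar> powr q \<le> \<delta> powr q" using q by (intro powr_mono2) auto
      then show ?thesis using gk by linarith
    next
      case 2
      have "g \<ge> (1 - q + q* s1 - s1 powr q) + \<beta>1*(r - s1)"
        using tangent_g[OF q r, of s1] s1 by (simp add: g_def \<beta>1_def)
      moreover have "1 - q + q* s1 - s1 powr q \<ge> 0" using g_nonneg[OF q, of s1] s1 by simp
      ultimately have "g \<ge> \<beta>1*(r - s1)" by linarith
      moreover have "\<beta>1*(r-s1) \<ge> \<beta>1*((r-1)/2)" using b1 2 by (intro mult_left_mono) (auto simp: s1_def)
      ultimately have ga: "g \<ge> \<beta>1*(r-1)/2" by simp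
      have "r - 1 = (r-1) powr q * (r-1) powr (1-q)" using 2 d
        by (simp flip: powr_add)
      also have "\<dots> \<ge> (r-1) powr q * \<delta> powr (1-q)"
        using 2 d q by (intro mult_left_mono powr_mono2) auto
      finally have "g \<ge> \<beta>1 * ((r-1) powr q * \<delta> powr (1-q)) / 2"
        using ga b1 by (smt (verit) divide_right_mono mult_left_mono)
      moreover have "\<bar>1-r\<bar> = r - 1" using 2 d by simp
      ultimately have "g \<ge> \<kappa>1 * \<bar>1-r\<bar> powr q" by (simp add: \<kappa>1_def algebra_simps)
      moreover have "\<kappa> * \<bar>1-r\<bar> powr q \<le> \<kappa>1 * \<bar>1-r\<bar> powr q"
        by (intro mult_right_mono) (auto simp: \<kappa>_def)
      ultimately have "\<bar>1-r\<bar> powr q \<le> g / \<kappa>" using k by (simp add: field_simps)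
      moreover have "\<delta> powr q \<ge> 0" by simp
      ultimately show ?thesis by linarith
    next
      case 3
      have "g \<ge> (1 - q + q* s2 - s2 powr q) + q*(1 - s2 powr (q-1))*(r - s2)"
        using tangent_g[OF q r, of s2] s2 by (simp add: g_def)
      moreover have "1 - q + q* s2 - s2 powr q \<ge> 0" using g_nonneg[OF q, of s2] s2 by simp
      moreover have "q*(1 - s2 powr (q-1))*(r - s2) = \<beta>2*(s2 - r)" by (simp add: \<beta>2_def algebra_simps)
      moreover have "\<beta>2*(s2 - r) \<ge> \<beta>2*(\<delta>/2)" using b2 3 by (intro mult_left_mono) (auto simp: s2_def)
      ultimately have "g \<ge> \<kappa>2" by (simp add: \<kappa>2_def)
      hence "g / \<kappa> \<ge> 1" using k by (simp add: \<kappa>_def field_simps)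
      moreover have "\<bar>1-r\<bar> powr q \<le> 1" using 3 r d q powr_mono2[of q "\<bar>1-r\<bar>" 1] by auto
      ultimately show ?thesis by (smt (verit) powr_ge_zero)
    qed
  qed
qed

lemma H_strict_mono:
  fixes q s t :: real
  assumes q: "0 < q" "q < 1" and st: "1 \<le> s" "s < t"
  shows "H_fun q s < H_fun q t"
proof -
  have D: "\<And>x. s \<le> x \<Longrightarrow> x \<le> t \<Longrightarrow> DERIV (H_fun q) x :> ((1-q)*(q * x powr (q-1)) + q*((q-1)* x powr (q-1-1)))"
    using st unfolding H_fun_def by (auto intro!: derivative_eq_intros)
  obtain z where z: "s < z" "z < t" "H_fun q t - H_fun q s = (t - s) * ((1-q)*(q * z powr (q-1)) + q*((q-1)* z powr (q-1-1)))"
    using MVT2[OF st(2) D] by blast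
  have z1: "z > 1" using z st by simp
  have "z powr (q-1) = z * z powr (q-1-1)" using z1 powr_add[of z 1 "q-1-1"] by simp
  hence "(1-q)*(q * z powr (q-1)) + q*((q-1)* z powr (q-1-1)) = q*(1-q)*(z-1)*z powr (q-1-1)"
    by (simp add: algebra_simps)
  moreover have "q*(1-q)*(z-1)*z powr (q-1-1) > 0" using q z1 by simp
  ultimately have "(t - s) * ((1-q)*(q * z powr (q-1)) + q*((q-1)* z powr (q-1-1))) > 0"
    using st by simp
  then show ?thesis using z(3) by linarith
qed

lemma H_inv_props:
  fixes q z :: real
  assumes q: "0 < q" "q < 1" and z: "1 \<le> z"
  shows "1 \<le> H_inv q z" "H_fun q (H_inv q z) = z"
proof -
  define b where "b = max 1 ((z/(1-q)) powr (1/q))"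
  have b1: "b \<ge> 1" by (simp add: b_def)
  have "b powr q \<ge> ((z/(1-q)) powr (1/q)) powr q" using q by (intro powr_mono2) (auto simp: b_def)
  also have "((z/(1-q)) powr (1/q)) powr q = z/(1-q)" using q z by (simp add: powr_powr)
  finally have "(1-q) * b powr q \<ge> z" using q by (simp add: field_simps)
  moreover have "q * b powr (q-1) \<ge> 0" using q by simp
  ultimately have Hb: "H_fun q b \<ge> z" by (simp add: H_fun_def)
  have H1: "H_fun q 1 \<le> z" using z by (simp add: H_fun_def)
  have "\<forall>x. 1 \<le> x \<and> x \<le> b \<longrightarrow> isCont (H_fun q) x"
    unfolding H_fun_def by (auto intro!: continuous_intros)
  then obtain y where y: "1 \<le> y" "y \<le> b" "H_fun q y = z" using IVT[OF H1 Hb b1] by blast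
  have ex: "\<exists>!y. 1 \<le> y \<and> H_fun q y = z"
  proof (intro ex1I[of _ y])
    show "1 \<le> y \<and> H_fun q y = z" using y by simp
    fix w assume w: "1 \<le> w \<and> H_fun q w = z"
    show "w = y"
    proof (rule ccontr)
      assume "w \<noteq> y"
      then consider "w < y" | "y < w" by linarith
      then show False using H_strict_mono[OF q] w y by cases fastforce+
    qed
  qed
  show "1 \<le> H_inv q z" "H_fun q (H_inv q z) = z"
    using theI'[OF ex] unfolding H_inv_def by auto
qed


locale tree_setup = prob_space M for M :: "'a measure" +
  fixes C :: "'a set \<Rightarrow> 'a set set" and T :: "'a set set"
  assumes T_sets: "T \<subseteq> sets M" and T_pos: "\<And>I. I \<in> T \<Longrightarrow> 0 < measure M I"
  and C_props: "\<And>I. I \<in> T \<Longrightarrow> C I \<subseteq> T \<and> countable (C I) \<and> disjoint (C I) \<and> \<Union>(C I) = I"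
  and T_eq: "T = (\<Union>m. tree_level M C m)"
begin

abbreviation L where "L k \<equiv> tree_level M C k"

lemma L_0: "L 0 = {space M}" by (simp add: tree_level_def)
lemma L_Suc: "L (Suc m) = (\<Union>I\<in>L m. C I)" by (simp add: tree_level_def)
lemma L_T: "L m \<subseteq> T" using T_eq by auto
lemma L_sets: "I \<in> L m \<Longrightarrow> I \<in> sets M" using L_T T_sets by auto

lemma L_props: "countable (L m) \<and> disjoint (L m) \<and> \<Union>(L m) = space M"
proof (induction m)
  case 0 then show ?case by (simp add: L_0 disjoint_def)
next
  case (Suc m)
  have CI: "\<And>I. I \<in> L m \<Longrightarrow> C I \<subseteq> T \<and> countable (C I) \<and> disjoint (C I) \<and> \<Union>(C I) = I"
    using C_props L_T by auto
  have "countable (L (Suc m))" unfolding L_Suc using Suc CI by (intro countable_UN) auto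
  moreover have "disjoint (L (Suc m))"
    unfolding disjoint_def L_Suc
  proof (intro ballI impI)
    fix J J' assume J: "J \<in> (\<Union>I\<in>L m. C I)" and J': "J' \<in> (\<Union>I\<in>L m. C I)" and ne: "J \<noteq> J'"
    then obtain I I' where I: "I \<in> L m" "J \<in> C I" and I': "I' \<in> L m" "J' \<in> C I'" by auto
    show "J \<inter> J' = {}"
    proof (cases "I = I'")
      case True then show ?thesis using CI[OF I(1)] I I' ne by (auto simp: disjoint_def)
    next
      case False
      then have "I \<inter> I' = {}" using Suc I I' by (auto simp: disjoint_def)
      moreover have "J \<subseteq> I" "J' \<subseteq> I'" using CI I I' by auto
      ultimately show ?thesis by auto
    qed
  qed
  moreover have "\<Union>(L (Suc m)) = (\<Union>I\<in>L m. \<Union>(C I))" unfolding L_Suc by auto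
  moreover have "(\<Union>I\<in>L m. \<Union>(C I)) = (\<Union>I\<in>L m. I)" using CI by auto
  ultimately have "countable (L (Suc m))" "disjoint (L (Suc m))" "\<Union>(L (Suc m)) = space M" using Suc by auto
  then show ?case by blast
qed

lemma countable_T: "countable T"
  unfolding T_eq using L_props by auto

definition cell :: "nat \<Rightarrow> 'a \<Rightarrow> 'a set" where
  "cell k x = (THE I. I \<in> L k \<and> x \<in> I)"

lemma cell_unique: assumes "I \<in> L k" "x \<in> I" shows "cell k x = I"
  unfolding cell_def
proof (rule the_equality)
  show "I \<in> L k \<and> x \<in> I" using assms by simp
  fix J assume "J \<in> L k \<and> x \<in> J"
  then show "J = I" using L_props[of k] assms by (auto simp: disjoint_def)
qed

lemma cell: assumes "x \<in> space M" shows "cell k x \<in> L k" "x \<in> cell k x"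
proof -
  obtain I where "I \<in> L k" "x \<in> I" using L_props[of k] assms by auto
  then show "cell k x \<in> L k" "x \<in> cell k x" using cell_unique by auto
qed

lemma cell_0: "x \<in> space M \<Longrightarrow> cell 0 x = space M"
  using cell_unique[of "space M" 0 x] by (simp add: L_0)

lemma cell_Suc_sub: assumes "x \<in> space M" shows "cell (Suc k) x \<subseteq> cell k x"
proof -
  obtain I where I: "I \<in> L k" "cell (Suc k) x \<in> C I" using cell(1)[OF assms, of "Suc k"] L_Suc by auto
  have "cell (Suc k) x \<subseteq> I" using I C_props L_T by blast
  moreover then have "cell k x = I" using cell_unique[OF I(1)] cell(2)[OF assms] by auto
  ultimately show ?thesis by simp
qed

lemma cell_sub: assumes "x \<in> space M" "j \<le> k" shows "cell k x \<subseteq> cell j x"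
  using assms(2)
proof (induction k)
  case 0 then show ?case by simp
next
  case (Suc k)
  then show ?case using cell_Suc_sub[OF assms(1), of k] by (cases "j = Suc k") auto
qed

lemma cell_eq:
  assumes "x \<in> space M" "x' \<in> space M" "j \<le> k" "cell k x = cell k x'"
  shows "cell j x = cell j x'"
proof -
  have "x' \<in> cell j x" using cell_sub[OF assms(1,3)] cell(2)[OF assms(2), of k] assms(4) by auto
  then show ?thesis using cell_unique cell(1)[OF assms(1)] by auto
qed

lemma cells_T: assumes "x \<in> space M" shows "{I\<in>T. x \<in> I} = range (\<lambda>k. cell k x)"
proof
  show "{I \<in> T. x \<in> I} \<subseteq> range (\<lambda>k. cell k x)"
  proof
    fix I assume "I \<in> {I \<in> T. x \<in> I}"
    then obtain k where "I \<in> L k" "x \<in> I" using T_eq by auto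
    then show "I \<in> range (\<lambda>k. cell k x)" using cell_unique by auto
  qed
  show "range (\<lambda>k. cell k x) \<subseteq> {I \<in> T. x \<in> I}" using cell[OF assms] L_T by auto
qed

lemma cell_sets: "x \<in> space M \<Longrightarrow> cell k x \<in> sets M" using cell L_sets by auto
lemma cell_pos: assumes "x \<in> space M" shows "0 < measure M (cell k x)"
  using cell(1)[OF assms, of k] L_T T_pos by blast
lemma L_pos: "I \<in> L k \<Longrightarrow> 0 < measure M I" using L_T T_pos by auto

lemma decomp:
  assumes [measurable]: "h \<in> borel_measurable M"
  shows "(\<integral>\<^sup>+x. h x \<partial>M) = (\<integral>\<^sup>+I. (\<integral>\<^sup>+x. h x * indicator I x \<partial>M) \<partial>count_space (L k))"
proof -
  have "(\<integral>\<^sup>+x. h x \<partial>M) = (\<integral>\<^sup>+x. (\<integral>\<^sup>+I. h x * indicator I x \<partial>count_space (L k)) \<partial>M)"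
  proof (rule nn_integral_cong)
    fix x assume x: "x \<in> space M"
    have "(\<integral>\<^sup>+I. h x * indicator I x \<partial>count_space (L k)) = (\<integral>\<^sup>+I. h x * indicator {cell k x} I \<partial>count_space (L k))"
    proof (rule nn_integral_cong)
      fix I assume "I \<in> space (count_space (L k))"
      then have "I \<in> L k" by simp
      show "h x * indicator I x = h x * indicator {cell k x} I"
      proof (cases "x \<in> I")
        case True
        then have "cell k x = I" using cell_unique \<open>I \<in> L k\<close> by blast
        then show ?thesis using True by simp
      next
        case False
        then have "I \<noteq> cell k x" using cell(2)[OF x, of k] by blast
        then show ?thesis using False by simp
      qed
    qed
    also have "\<dots> = h x"
      using cell(1)[OF x, of k] cell(2)[OF x, of k] by (simp add: emeasure_count_space)
    finally show "h x = (\<integral>\<^sup>+I. h x * indicator I x \<partial>count_space (L k))" by simp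
  qed
  also have "\<dots> = (\<integral>\<^sup>+I. (\<integral>\<^sup>+x. h x * indicator I x \<partial>M) \<partial>count_space (L k))"
    using L_props[of k] L_sets by (intro nn_integral_count_space_nn_integral) auto
  finally show ?thesis .
qed

end

lemma nn_add_real:
  assumes [measurable]: "f \<in> borel_measurable M" "g \<in> borel_measurable M"
    and "\<And>x. x \<in> space M \<Longrightarrow> 0 \<le> f x" "\<And>x. x \<in> space M \<Longrightarrow> 0 \<le> g x"
  shows "(\<integral>\<^sup>+x. ennreal (f x + g x) \<partial>M) = (\<integral>\<^sup>+x. ennreal (f x) \<partial>M) + (\<integral>\<^sup>+x. ennreal (g x) \<partial>M)"
proof -
  have "(\<integral>\<^sup>+x. ennreal (f x + g x) \<partial>M) = (\<integral>\<^sup>+x. ennreal (f x) + ennreal (g x) \<partial>M)"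
    using assms by (intro nn_integral_cong) simp
  also have "\<dots> = (\<integral>\<^sup>+x. ennreal (f x) \<partial>M) + (\<integral>\<^sup>+x. ennreal (g x) \<partial>M)"
    by (rule nn_integral_add) auto
  finally show ?thesis .
qed

locale tree_fun = tree_setup M C T for M C T +
  fixes \<phi> :: "'a \<Rightarrow> real" and q :: real
  assumes phi_meas[measurable]: "\<phi> \<in> borel_measurable M"
  and phi_nn: "\<And>x. x \<in> space M \<Longrightarrow> 0 \<le> \<phi> x"
  and phi_int: "integrable M \<phi>"
  and mean_pos: "0 < integral\<^sup>L M \<phi>"
  and q0: "0 < q" and q1: "q < 1"
begin

abbreviation mean where "mean \<equiv> integral\<^sup>L M \<phi>"

definition NI where "NI I = (\<integral>\<^sup>+y. ennreal (\<phi> y) * indicator I y \<partial>M)"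
definition av where "av I = enn2real (NI I) / measure M I"

lemma nn_phi: "(\<integral>\<^sup>+y. ennreal (\<phi> y) \<partial>M) = ennreal mean"
  using phi_nn by (intro nn_integral_eq_integral phi_int) auto

lemma NI_fin: "NI I \<noteq> \<infinity>"
proof -
  have "NI I \<le> (\<integral>\<^sup>+y. ennreal (\<phi> y) \<partial>M)"
    unfolding NI_def by (intro nn_integral_mono) (simp add: indicator_def)
  then show ?thesis using nn_phi by (auto simp: top_unique)
qed

lemma NI_eq: assumes "I \<in> sets M" "0 < measure M I"
  shows "NI I = ennreal (av I) * emeasure M I"
proof -
  have "NI I = ennreal (enn2real (NI I))" using NI_fin[of I] by (simp add: ennreal_enn2real less_top)
  also have "enn2real (NI I) = av I * measure M I" using assms by (simp add: av_def)
  also have "ennreal (av I * measure M I) = ennreal (av I) * ennreal (measure M I)"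
    using assms by (intro ennreal_mult) (auto simp: av_def)
  finally show ?thesis by (simp add: emeasure_eq_measure)
qed

lemma av_nn: "0 \<le> av I" by (simp add: av_def)

lemma av_space: "av (space M) = mean"
proof -
  have "NI (space M) = (\<integral>\<^sup>+y. ennreal (\<phi> y) \<partial>M)"
    unfolding NI_def by (intro nn_integral_cong) simp
  then show ?thesis using nn_phi mean_pos by (simp add: av_def prob_space)
qed

lemma dm_term: assumes "I \<in> sets M" "0 < measure M I"
  shows "(\<integral>\<^sup>+y. ennreal \<bar>\<phi> y\<bar> * indicator I y \<partial>M) / emeasure M I = ennreal (av I)"
proof -
  have "(\<integral>\<^sup>+y. ennreal \<bar>\<phi> y\<bar> * indicator I y \<partial>M) = NI I"
    unfolding NI_def using phi_nn by (intro nn_integral_cong) simp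
  also have "\<dots> = ennreal (enn2real (NI I))" using NI_fin[of I] by (simp add: ennreal_enn2real less_top)
  finally show ?thesis using assms
    by (simp add: emeasure_eq_measure divide_ennreal av_def)
qed

lemma dm_eq: assumes "x \<in> space M"
  shows "dyadic_max M T \<phi> x = (SUP k. ennreal (av (cell k x)))"
proof -
  have "dyadic_max M T \<phi> x = (SUP I\<in>range (\<lambda>k. cell k x). (\<integral>\<^sup>+y. ennreal \<bar>\<phi> y\<bar> * indicator I y \<partial>M) / emeasure M I)"
    unfolding dyadic_max_def cells_T[OF assms] by simp
  also have "\<dots> = (SUP k. ennreal (av (cell k x)))"
    unfolding image_image using dm_term cell_sets[OF assms] cell_pos[OF assms] by simp
  finally show ?thesis .
qed

lemma av_cell_meas[measurable]: "(\<lambda>x. av (cell k x)) \<in> borel_measurable M"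
proof -
  have eq: "(SUP I\<in>L k. ennreal (av I) * indicator I x) = ennreal (av (cell k x))" if x: "x \<in> space M" for x
  proof (rule antisym)
    show "(SUP I\<in>L k. ennreal (av I) * indicator I x) \<le> ennreal (av (cell k x))"
    proof (rule SUP_least)
      fix I assume I: "I \<in> L k"
      show "ennreal (av I) * indicator I x \<le> ennreal (av (cell k x))"
      proof (cases "x \<in> I")
        case True then have "cell k x = I" using cell_unique I by blast
        then show ?thesis using True by simp
      qed simp
    qed
    show "ennreal (av (cell k x)) \<le> (SUP I\<in>L k. ennreal (av I) * indicator I x)"
      using cell[OF x, of k] by (intro SUP_upper2[of "cell k x"]) auto
  qed
  have "(\<lambda>x. enn2real (SUP I\<in>L k. ennreal (av I) * indicator I x)) \<in> borel_measurable M"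
  proof (intro borel_measurable_enn2real borel_measurable_SUP)
    show "countable (L k)" using L_props by blast
    fix I assume "I \<in> L k"
    then have [measurable]: "I \<in> sets M" by (rule L_sets)
    show "(\<lambda>x. ennreal (av I) * indicator I x) \<in> borel_measurable M" by measurable
  qed
  then show ?thesis by (rule measurable_cong[THEN iffD1, rotated]) (simp add: eq av_nn)
qed

lemma dm_meas[measurable]: "(\<lambda>x. dyadic_max M T \<phi> x) \<in> borel_measurable M"
proof -
  have "(\<lambda>x. SUP k. ennreal (av (cell k x))) \<in> borel_measurable M" by measurable
  then show ?thesis by (rule measurable_cong[THEN iffD1, rotated]) (simp add: dm_eq)
qed

primrec Fm :: "nat \<Rightarrow> 'a \<Rightarrow> real" where
  "Fm 0 x = av (space M)"
| "Fm (Suc m) x = max (Fm m x) (av (cell (Suc m) x))"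

lemma Fm_meas[measurable]: "(\<lambda>x. Fm m x) \<in> borel_measurable M"
  by (induction m) auto

lemma Fm_ge: "mean \<le> Fm m x"
  by (induction m) (auto simp: av_space)

lemma Fm_pos: "0 < Fm m x" using Fm_ge[of m x] mean_pos by linarith

lemma Fm_inc: "incseq (\<lambda>m. Fm m x)"
  by (rule incseq_SucI) simp

lemma Fm_const:
  assumes "x \<in> space M" "x' \<in> space M" "m \<le> k" "cell k x = cell k x'"
  shows "Fm m x = Fm m x'"
  using assms(3)
proof (induction m)
  case 0 then show ?case by simp
next
  case (Suc m)
  then have "cell (Suc m) x = cell (Suc m) x'" using cell_eq[OF assms(1,2) _ assms(4)] by blast
  then show ?case using Suc by simp
qed

lemma Fm_av: assumes "x \<in> space M" shows "av (cell k x) \<le> Fm k x"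
  using assms by (cases k) (auto simp: cell_0)

lemma Fm_attain: assumes "x \<in> space M" shows "\<exists>j\<le>m. Fm m x = av (cell j x)"
proof (induction m)
  case 0 then show ?case using assms by (auto simp: cell_0)
next
  case (Suc m)
  then obtain j where "j \<le> m" "Fm m x = av (cell j x)" by blast
  then show ?case by (cases "Fm m x \<le> av (cell (Suc m) x)") (auto simp: max_def intro: le_SucI)
qed

lemma Fm_SUP: assumes "x \<in> space M" shows "(SUP m. ennreal (Fm m x)) = dyadic_max M T \<phi> x"
  unfolding dm_eq[OF assms]
proof (rule antisym)
  show "(SUP m. ennreal (Fm m x)) \<le> (SUP k. ennreal (av (cell k x)))"
  proof (rule SUP_least)
    fix m obtain j where "Fm m x = av (cell j x)" using Fm_attain[OF assms] by blast
    then show "ennreal (Fm m x) \<le> (SUP k. ennreal (av (cell k x)))" by (auto intro: SUP_upper2)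
  qed
  show "(SUP k. ennreal (av (cell k x))) \<le> (SUP m. ennreal (Fm m x))"
    using Fm_av[OF assms] by (intro SUP_mono) (auto intro: ennreal_leI)
qed

lemma K:
  assumes g_meas[measurable]: "g \<in> borel_measurable M" and g_nn: "\<And>x. x \<in> space M \<Longrightarrow> 0 \<le> g x"
    and g_const: "\<And>x x'. x \<in> space M \<Longrightarrow> x' \<in> space M \<Longrightarrow> cell k x = cell k x' \<Longrightarrow> g x = g x'"
  shows "(\<integral>\<^sup>+x. ennreal (\<phi> x * g x) \<partial>M) = (\<integral>\<^sup>+x. ennreal (av (cell k x) * g x) \<partial>M)"
proof -
  have "(\<integral>\<^sup>+x. ennreal (\<phi> x * g x) \<partial>M) = (\<integral>\<^sup>+I. (\<integral>\<^sup>+x. ennreal (\<phi> x * g x) * indicator I x \<partial>M) \<partial>count_space (L k))"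
    by (rule decomp) measurable
  also have "\<dots> = (\<integral>\<^sup>+I. (\<integral>\<^sup>+x. ennreal (av (cell k x) * g x) * indicator I x \<partial>M) \<partial>count_space (L k))"
  proof (rule nn_integral_cong)
    fix I assume "I \<in> space (count_space (L k))"
    then have I: "I \<in> L k" by simp
    have Is[measurable]: "I \<in> sets M" using I by (rule L_sets)
    have "0 < measure M I" using I by (rule L_pos)
    then have "I \<noteq> {}" by auto
    then obtain x0 where x0: "x0 \<in> I" by blast
    have Isp: "I \<subseteq> space M" using Is by (rule sets.sets_into_space)
    have cI: "cell k x = I" if "x \<in> I" for x using cell_unique[OF I that] .
    have gI: "g x = g x0" if "x \<in> I" for x
      using g_const[of x x0] that x0 Isp cI by auto
    have g0: "0 \<le> g x0" using g_nn x0 Isp by auto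
    have "(\<integral>\<^sup>+x. ennreal (\<phi> x * g x) * indicator I x \<partial>M) = (\<integral>\<^sup>+x. ennreal (g x0) * (ennreal (\<phi> x) * indicator I x) \<partial>M)"
    proof (rule nn_integral_cong)
      fix x assume "x \<in> space M"
      show "ennreal (\<phi> x * g x) * indicator I x = ennreal (g x0) * (ennreal (\<phi> x) * indicator I x)"
        using gI[of x] g0 by (cases "x \<in> I") (auto simp: ennreal_mult'' mult.commute)
    qed
    also have "\<dots> = ennreal (g x0) * NI I" unfolding NI_def by (rule nn_integral_cmult) measurable
    also have "\<dots> = ennreal (g x0) * (ennreal (av I) * emeasure M I)" using NI_eq Is \<open>0 < measure M I\<close> by simp
    also have "\<dots> = ennreal (av I * g x0) * emeasure M I"
      using g0 av_nn[of I] by (simp add: ennreal_mult mult_ac)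
    also have "\<dots> = (\<integral>\<^sup>+x. ennreal (av I * g x0) * indicator I x \<partial>M)"
      by (rule nn_integral_cmult_indicator[symmetric, OF Is])
    also have "\<dots> = (\<integral>\<^sup>+x. ennreal (av (cell k x) * g x) * indicator I x \<partial>M)"
    proof (rule nn_integral_cong)
      fix x assume "x \<in> space M"
      show "ennreal (av I * g x0) * indicator I x = ennreal (av (cell k x) * g x) * indicator I x"
        using gI[of x] cI[of x] by (cases "x \<in> I") auto
    qed
    finally show "(\<integral>\<^sup>+x. ennreal (\<phi> x * g x) * indicator I x \<partial>M) = (\<integral>\<^sup>+x. ennreal (av (cell k x) * g x) * indicator I x \<partial>M)" .
  qed
  also have "\<dots> = (\<integral>\<^sup>+x. ennreal (av (cell k x) * g x) \<partial>M)"
    by (rule decomp[symmetric]) measurable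
  finally show ?thesis .
qed

end

context tree_fun begin

definition W where "W m = (\<integral>\<^sup>+x. ennreal ((1-q) * Fm m x powr q + q * \<phi> x * Fm m x powr (q-1)) \<partial>M)"

lemma W_split:
  fixes a :: "'a \<Rightarrow> real" and F :: "'a \<Rightarrow> real"
  assumes [measurable]: "a \<in> borel_measurable M" "F \<in> borel_measurable M"
    and "\<And>x. x \<in> space M \<Longrightarrow> 0 \<le> a x" "\<And>x. 0 \<le> F x"
  shows "(\<integral>\<^sup>+x. ennreal ((1-q) * F x powr q + q * a x * F x powr (q-1)) \<partial>M)
     = (\<integral>\<^sup>+x. ennreal ((1-q) * F x powr q) \<partial>M) + (\<integral>\<^sup>+x. ennreal (a x * (q * F x powr (q-1))) \<partial>M)"
proof -
  have "(\<integral>\<^sup>+x. ennreal ((1-q) * F x powr q + q * a x * F x powr (q-1)) \<partial>M)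
     = (\<integral>\<^sup>+x. ennreal ((1-q) * F x powr q + a x * (q * F x powr (q-1))) \<partial>M)"
    by (simp add: mult_ac)
  also have "\<dots> = (\<integral>\<^sup>+x. ennreal ((1-q) * F x powr q) \<partial>M) + (\<integral>\<^sup>+x. ennreal (a x * (q * F x powr (q-1))) \<partial>M)"
    using assms q0 q1 by (intro nn_add_real) auto
  finally show ?thesis .
qed

lemma W_step_dummy: True by simp
lemma W_step: "W (Suc m) \<le> W m"
proof -
  let ?F' = "Fm (Suc m)" and ?F = "Fm m" and ?a = "\<lambda>x. av (cell (Suc m) x)"
  have F'c: "\<And>x x'. x \<in> space M \<Longrightarrow> x' \<in> space M \<Longrightarrow> cell (Suc m) x = cell (Suc m) x' \<Longrightarrow> q * ?F' x powr (q-1) = q * ?F' x' powr (q-1)"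
  proof -
    fix x x' assume h: "x \<in> space M" "x' \<in> space M" "cell (Suc m) x = cell (Suc m) x'"
    have "?F' x = ?F' x'" by (rule Fm_const[OF h(1,2) order_refl h(3)])
    then show "q * ?F' x powr (q-1) = q * ?F' x' powr (q-1)" by simp
  qed
  have Fc: "\<And>x x'. x \<in> space M \<Longrightarrow> x' \<in> space M \<Longrightarrow> cell (Suc m) x = cell (Suc m) x' \<Longrightarrow> q * ?F x powr (q-1) = q * ?F x' powr (q-1)"
  proof -
    fix x x' assume h: "x \<in> space M" "x' \<in> space M" "cell (Suc m) x = cell (Suc m) x'"
    have "?F x = ?F x'" by (rule Fm_const[OF h(1,2) _ h(3)]) simp
    then show "q * ?F x powr (q-1) = q * ?F x' powr (q-1)" by simp
  qed
  have "W (Suc m) = (\<integral>\<^sup>+x. ennreal ((1-q) * ?F' x powr q) \<partial>M) + (\<integral>\<^sup>+x. ennreal (\<phi> x * (q * ?F' x powr (q-1))) \<partial>M)"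
    unfolding W_def using phi_nn Fm_pos[THEN less_imp_le] by (intro W_split) (auto simp del: Fm.simps)
  also have "(\<integral>\<^sup>+x. ennreal (\<phi> x * (q * ?F' x powr (q-1))) \<partial>M) = (\<integral>\<^sup>+x. ennreal (?a x * (q * ?F' x powr (q-1))) \<partial>M)"
  proof (rule K[where g="\<lambda>x. q * ?F' x powr (q-1)"])
    show "(\<lambda>x. q * ?F' x powr (q-1)) \<in> borel_measurable M" by measurable
    show "\<And>x. 0 \<le> q * ?F' x powr (q-1)" using q0 by simp
  qed (fact F'c)
  also have "(\<integral>\<^sup>+x. ennreal ((1-q) * ?F' x powr q) \<partial>M) + \<dots> = (\<integral>\<^sup>+x. ennreal ((1-q) * ?F' x powr q + q * ?a x * ?F' x powr (q-1)) \<partial>M)"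
    using av_nn Fm_pos[THEN less_imp_le] by (intro W_split[symmetric]) (auto simp del: Fm.simps)
  also have "\<dots> \<le> (\<integral>\<^sup>+x. ennreal ((1-q) * ?F x powr q + q * ?a x * ?F x powr (q-1)) \<partial>M)"
  proof (intro nn_integral_mono ennreal_leI)
    fix x
    show "(1-q) * ?F' x powr q + q * ?a x * ?F' x powr (q-1) \<le> (1-q) * ?F x powr q + q * ?a x * ?F x powr (q-1)"
      using pw_max[OF q0 q1 Fm_pos av_nn] by simp
  qed
  also have "\<dots> = (\<integral>\<^sup>+x. ennreal ((1-q) * ?F x powr q) \<partial>M) + (\<integral>\<^sup>+x. ennreal (?a x * (q * ?F x powr (q-1))) \<partial>M)"
    using av_nn Fm_pos[THEN less_imp_le] by (intro W_split) (auto simp del: Fm.simps)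
  also have "(\<integral>\<^sup>+x. ennreal (?a x * (q * ?F x powr (q-1))) \<partial>M) = (\<integral>\<^sup>+x. ennreal (\<phi> x * (q * ?F x powr (q-1))) \<partial>M)"
  proof (rule K[where g="\<lambda>x. q * ?F x powr (q-1)", symmetric])
    show "(\<lambda>x. q * ?F x powr (q-1)) \<in> borel_measurable M" by measurable
    show "\<And>x. 0 \<le> q * ?F x powr (q-1)" using q0 by simp
  qed (fact Fc)
  also have "(\<integral>\<^sup>+x. ennreal ((1-q) * ?F x powr q) \<partial>M) + \<dots> = W m"
    unfolding W_def using phi_nn Fm_pos[THEN less_imp_le] by (intro W_split[symmetric]) (auto simp del: Fm.simps)
  finally show ?thesis .
qed

lemma W_0: "W 0 = ennreal (mean powr q)"
proof -
  have "W 0 = (\<integral>\<^sup>+x. ennreal ((1-q) * mean powr q) \<partial>M) + (\<integral>\<^sup>+x. ennreal (\<phi> x * (q * mean powr (q-1))) \<partial>M)"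
    unfolding W_def using phi_nn mean_pos by (subst W_split) (auto simp: av_space)
  also have "(\<integral>\<^sup>+x. ennreal (\<phi> x * (q * mean powr (q-1))) \<partial>M) = (\<integral>\<^sup>+x. ennreal (av (cell 0 x) * (q * mean powr (q-1))) \<partial>M)"
    using q0 by (intro K) auto
  also have "\<dots> = (\<integral>\<^sup>+x. ennreal (mean * (q * mean powr (q-1))) \<partial>M)"
    by (intro nn_integral_cong) (simp add: cell_0 av_space)
  also have "(\<integral>\<^sup>+x. ennreal ((1-q) * mean powr q) \<partial>M) + \<dots> = ennreal ((1-q) * mean powr q) + ennreal (mean * (q * mean powr (q-1)))"
    by (simp add: emeasure_space_1)
  also have "\<dots> = ennreal ((1-q) * mean powr q + mean * (q * mean powr (q-1)))"
    using q0 q1 mean_pos by (intro ennreal_plus[symmetric]) auto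
  also have "mean * mean powr (q-1) = mean powr q"
    using mean_pos powr_add[of mean 1 "q-1"] by simp
  then have "(1-q) * mean powr q + mean * (q * mean powr (q-1)) = mean powr q" by (simp add: algebra_simps)
  finally show ?thesis .
qed

lemma W_le: "W m \<le> ennreal (mean powr q)"
  by (induction m) (auto simp: W_0 intro: order_trans[OF W_step])

end

lemma SUP_lim_ennreal:
  fixes u :: "nat \<Rightarrow> ennreal"
  assumes "incseq u" "u \<longlonglongrightarrow> l"
  shows "(SUP n. u n) = l"
  using LIMSEQ_unique[OF LIMSEQ_SUP[OF assms(1)] assms(2)] .

context tree_fun begin

abbreviation Mx where "Mx x \<equiv> dyadic_max M T \<phi> x"
definition mr where "mr x = enn2real (Mx x)"

lemma mr_meas[measurable]: "mr \<in> borel_measurable M"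
  unfolding mr_def by measurable

lemma mr_nn: "0 \<le> mr x" by (simp add: mr_def)

lemma Fm_le_Mx: "x \<in> space M \<Longrightarrow> ennreal (Fm m x) \<le> Mx x"
  using Fm_SUP[of x] by (metis SUP_upper UNIV_I)

lemma Mx_fin: assumes "x \<in> space M" "Mx x \<noteq> \<infinity>" shows "Mx x = ennreal (mr x)"
  using assms by (simp add: mr_def ennreal_enn2real less_top)

lemma Fm_le_mr: assumes "x \<in> space M" "Mx x \<noteq> \<infinity>" shows "Fm m x \<le> mr x"
  using Fm_le_Mx[OF assms(1), of m] Mx_fin[OF assms] ennreal_le_iff[OF mr_nn] by simp

lemma mr_ge: assumes "x \<in> space M" "Mx x \<noteq> \<infinity>" shows "mean \<le> mr x"
  using Fm_le_mr[OF assms, of 0] Fm_ge[of 0 x] by simp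

lemma Fm_tendsto: assumes "x \<in> space M" "Mx x \<noteq> \<infinity>"
  shows "(\<lambda>m. Fm m x) \<longlonglongrightarrow> mr x"
proof -
  have inc: "incseq (\<lambda>m. ennreal (Fm m x))"
    by (rule incseq_SucI) (simp add: ennreal_leI)
  have "(\<lambda>m. ennreal (Fm m x)) \<longlonglongrightarrow> ennreal (mr x)"
    using LIMSEQ_SUP[OF inc] Fm_SUP[OF assms(1)] Mx_fin[OF assms] by simp
  then have "(\<lambda>m. enn2real (ennreal (Fm m x))) \<longlonglongrightarrow> mr x"
    by (rule tendsto_enn2real) (rule mr_nn)
  then show ?thesis using Fm_pos[THEN less_imp_le] by simp
qed

lemma epowr_SUP: assumes x: "x \<in> space M"
  shows "epowr (Mx x) q = (SUP m. ennreal (Fm m x powr q))"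
proof (cases "Mx x = \<infinity>")
  case False
  have inc: "incseq (\<lambda>m. ennreal (Fm m x powr q))"
    using q0 Fm_pos[THEN less_imp_le] by (intro incseq_SucI ennreal_leI powr_mono2) auto
  have "(\<lambda>m. Fm m x powr q) \<longlonglongrightarrow> mr x powr q"
    using Fm_tendsto[OF x False] mr_ge[OF x False] mean_pos
    by (intro tendsto_powr[OF _ tendsto_const]) auto
  then have "(\<lambda>m. ennreal (Fm m x powr q)) \<longlonglongrightarrow> ennreal (mr x powr q)"
    by (rule tendsto_ennrealI)
  then have "(SUP m. ennreal (Fm m x powr q)) = ennreal (mr x powr q)" by (rule SUP_lim_ennreal[OF inc])
  then show ?thesis using False by (simp add: epowr_def mr_def)
next
  case True
  show ?thesis
  proof (rule ccontr)
    assume ne: "epowr (Mx x) q \<noteq> (SUP m. ennreal (Fm m x powr q))"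
    have "epowr (Mx x) q = \<infinity>" using True by (simp add: epowr_def)
    then have S: "(SUP m. ennreal (Fm m x powr q)) \<noteq> \<infinity>" using ne by metis
    define s where "s = enn2real (SUP m. ennreal (Fm m x powr q))"
    have "Fm m x \<le> s powr (1/q)" for m
    proof -
      have "ennreal (Fm m x powr q) \<le> (SUP m. ennreal (Fm m x powr q))" by (rule SUP_upper) simp
      moreover have S': "(SUP m. ennreal (Fm m x powr q)) < top" using S unfolding infinity_ennreal_def by (simp only: top.not_eq_extremum)
      ultimately have "enn2real (ennreal (Fm m x powr q)) \<le> s" unfolding s_def
        by (rule enn2real_mono)
      then have "Fm m x powr q \<le> s" by simp
      then have "(Fm m x powr q) powr (1/q) \<le> s powr (1/q)"
        using q0 by (intro powr_mono2) auto
      then show ?thesis using q0 Fm_pos[of m x] by (simp add: powr_powr)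
    qed
    then have "Mx x \<le> ennreal (s powr (1/q))"
      unfolding Fm_SUP[OF x, symmetric] by (intro SUP_least ennreal_leI) auto
    then show False using True by (simp add: top_unique)
  qed
qed

lemma epowr_meas[measurable]: "(\<lambda>x. epowr (Mx x) q) \<in> borel_measurable M"
  unfolding epowr_def by measurable

lemma AE_fin: "AE x in M. Mx x \<noteq> \<infinity>"
proof -
  have inc: "incseq (\<lambda>m x. ennreal (Fm m x powr q))"
    using q0 Fm_pos[THEN less_imp_le]
    by (intro incseq_SucI le_funI ennreal_leI powr_mono2) auto
  have "(\<integral>\<^sup>+x. epowr (Mx x) q \<partial>M) = (\<integral>\<^sup>+x. (SUP m. ennreal (Fm m x powr q)) \<partial>M)"
    by (intro nn_integral_cong) (simp add: epowr_SUP)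
  also have "\<dots> = (SUP m. (\<integral>\<^sup>+x. ennreal (Fm m x powr q) \<partial>M))"
    using inc by (intro nn_integral_monotone_convergence_SUP) auto
  finally have eq: "(\<integral>\<^sup>+x. epowr (Mx x) q \<partial>M) = (SUP m. (\<integral>\<^sup>+x. ennreal (Fm m x powr q) \<partial>M))" .
  have le: "ennreal (1-q) * (\<integral>\<^sup>+x. ennreal (Fm m x powr q) \<partial>M) \<le> ennreal (mean powr q)" for m
  proof -
    have "ennreal (1-q) * (\<integral>\<^sup>+x. ennreal (Fm m x powr q) \<partial>M) = (\<integral>\<^sup>+x. ennreal ((1-q) * Fm m x powr q) \<partial>M)"
      using q1 by (subst nn_integral_cmult[symmetric]) (auto simp: ennreal_mult)
    also have "\<dots> \<le> W m" unfolding W_def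
      using q0 q1 phi_nn Fm_pos[THEN less_imp_le] by (intro nn_integral_mono ennreal_leI) auto
    also have "\<dots> \<le> ennreal (mean powr q)" by (rule W_le)
    finally show ?thesis .
  qed
  have "ennreal (1-q) * (\<integral>\<^sup>+x. epowr (Mx x) q \<partial>M) \<le> ennreal (mean powr q)"
    unfolding eq SUP_mult_left_ennreal using le by (intro SUP_least) auto
  then have "(\<integral>\<^sup>+x. epowr (Mx x) q \<partial>M) \<noteq> \<infinity>" using q1
    by (auto simp: ennreal_mult_top top_unique)
  then have "AE x in M. epowr (Mx x) q \<noteq> \<infinity>"
    by (intro nn_integral_PInf_AE) auto
  then show ?thesis by eventually_elim (auto simp: epowr_def)
qed

definition G where "G x = (1-q) * mr x powr q + q * \<phi> x * mr x powr (q-1)"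

lemma G_meas[measurable]: "G \<in> borel_measurable M" unfolding G_def by measurable

lemma G_nn: "x \<in> space M \<Longrightarrow> 0 \<le> G x"
  unfolding G_def using q0 q1 phi_nn mr_nn by simp

lemma G_nn_int: "(\<integral>\<^sup>+x. ennreal (G x) \<partial>M) \<le> ennreal (mean powr q)"
proof -
  let ?u = "\<lambda>m x. ennreal ((1-q) * Fm m x powr q + q * \<phi> x * mr x powr (q-1))"
  have inc: "incseq ?u"
    using q0 q1 Fm_pos[THEN less_imp_le] phi_nn mr_nn
    by (intro incseq_SucI le_funI ennreal_leI add_right_mono mult_left_mono powr_mono2) auto
  have "(\<integral>\<^sup>+x. ennreal (G x) \<partial>M) = (\<integral>\<^sup>+x. (SUP m. ?u m x) \<partial>M)"
  proof (rule nn_integral_cong_AE)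
    show "AE x in M. ennreal (G x) = (SUP m. ?u m x)"
      using AE_fin AE_space
    proof eventually_elim
      case (elim x)
      then have True: "x \<in> space M" and fin: "Mx x \<noteq> \<infinity>" by auto
      have incx: "incseq (\<lambda>m. ?u m x)" using inc by (auto simp: incseq_def le_fun_def)
      have "(\<lambda>m. (1-q) * Fm m x powr q + q * \<phi> x * mr x powr (q-1)) \<longlonglongrightarrow> (1-q) * mr x powr q + q * \<phi> x * mr x powr (q-1)"
        using Fm_tendsto[OF True fin] mr_ge[OF True fin] mean_pos
        by (intro tendsto_add[OF tendsto_mult[OF tendsto_const tendsto_powr[OF _ tendsto_const]] tendsto_const]) auto
      then have "(\<lambda>m. ?u m x) \<longlonglongrightarrow> ennreal (G x)" unfolding G_def by (rule tendsto_ennrealI)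
      then show ?case using SUP_lim_ennreal[OF incx] by simp
    qed
  qed
  also have "\<dots> = (SUP m. (\<integral>\<^sup>+x. ?u m x \<partial>M))"
    using inc by (intro nn_integral_monotone_convergence_SUP) auto
  also have "\<dots> \<le> ennreal (mean powr q)"
  proof (rule SUP_least)
    fix m
    have "(\<integral>\<^sup>+x. ?u m x \<partial>M) \<le> W m" unfolding W_def
    proof (intro nn_integral_mono ennreal_leI add_mono order_refl mult_left_mono)
      fix x assume x: "x \<in> space M"
      show "mr x powr (q-1) \<le> Fm m x powr (q-1)"
      proof (cases "Mx x = \<infinity>")
        case True then show ?thesis by (simp add: mr_def)
      next
        case False then show ?thesis
          using Fm_le_mr[OF x False] Fm_pos[of m x] q1 by (intro powr_mono2') auto
      qed
      show "0 \<le> q * \<phi> x" using q0 phi_nn[OF x] by simp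
    qed
    also have "\<dots> \<le> ennreal (mean powr q)" by (rule W_le)
    finally show "(\<integral>\<^sup>+x. ?u m x \<partial>M) \<le> ennreal (mean powr q)" .
  qed
  finally show ?thesis .
qed

end

context tree_fun begin

lemma tree_final:
  shows "integrable M (\<lambda>x. mr x powr q)" "integrable M (\<lambda>x. \<phi> x * mr x powr (q-1))"
    "(1-q) * (\<integral>x. mr x powr q \<partial>M) + q * (\<integral>x. \<phi> x * mr x powr (q-1) \<partial>M) \<le> mean powr q"
    "(\<integral>\<^sup>+x. epowr (Mx x) q \<partial>M) = ennreal (\<integral>x. mr x powr q \<partial>M)"
proof -
  have nnG: "(\<integral>\<^sup>+x. ennreal (norm (G x)) \<partial>M) = (\<integral>\<^sup>+x. ennreal (G x) \<partial>M)"
    using G_nn by (intro nn_integral_cong) simp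
  have Gint: "integrable M G"
  proof (rule integrableI_bounded)
    show "(\<integral>\<^sup>+x. ennreal (norm (G x)) \<partial>M) < \<infinity>"
      unfolding nnG using G_nn_int by (simp add: le_less_trans)
  qed simp
  show i1: "integrable M (\<lambda>x. mr x powr q)"
  proof (rule Bochner_Integration.integrable_bound[OF integrable_divide_zero[OF Gint, of "1-q"]])
    show "AE x in M. norm (mr x powr q) \<le> norm (G x / (1-q))"
    proof (rule AE_I2)
      fix x assume x: "x \<in> space M"
      have "(1-q) * mr x powr q \<le> G x" unfolding G_def using q0 phi_nn[OF x] by simp
      then show "norm (mr x powr q) \<le> norm (G x / (1-q))" using G_nn[OF x] q1
        by (simp add: field_simps)
    qed
  qed simp
  show i2: "integrable M (\<lambda>x. \<phi> x * mr x powr (q-1))"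
  proof (rule Bochner_Integration.integrable_bound[OF integrable_divide_zero[OF Gint, of "q"]])
    show "AE x in M. norm (\<phi> x * mr x powr (q-1)) \<le> norm (G x / q)"
    proof (rule AE_I2)
      fix x assume x: "x \<in> space M"
      have "q * (\<phi> x * mr x powr (q-1)) \<le> G x" unfolding G_def using q1 by simp
      then show "norm (\<phi> x * mr x powr (q-1)) \<le> norm (G x / q)" using G_nn[OF x] q0 phi_nn[OF x]
        by (simp add: field_simps)
    qed
  qed simp
  have "(\<integral>x. G x \<partial>M) = (\<integral>x. (1-q) * mr x powr q + q * (\<phi> x * mr x powr (q-1)) \<partial>M)"
    by (simp add: G_def mult_ac)
  also have "\<dots> = (1-q) * (\<integral>x. mr x powr q \<partial>M) + q * (\<integral>x. \<phi> x * mr x powr (q-1) \<partial>M)"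
    using i1 i2 by (subst Bochner_Integration.integral_add) auto
  finally have eqG: "(\<integral>x. G x \<partial>M) = (1-q) * (\<integral>x. mr x powr q \<partial>M) + q * (\<integral>x. \<phi> x * mr x powr (q-1) \<partial>M)" .
  have "ennreal (\<integral>x. G x \<partial>M) = (\<integral>\<^sup>+x. ennreal (G x) \<partial>M)"
    using G_nn by (intro nn_integral_eq_integral[symmetric] Gint) auto
  also have "\<dots> \<le> ennreal (mean powr q)" by (rule G_nn_int)
  finally show "(1-q) * (\<integral>x. mr x powr q \<partial>M) + q * (\<integral>x. \<phi> x * mr x powr (q-1) \<partial>M) \<le> mean powr q"
    unfolding eqG by (simp add: ennreal_le_iff)
  have "(\<integral>\<^sup>+x. epowr (Mx x) q \<partial>M) = (\<integral>\<^sup>+x. ennreal (mr x powr q) \<partial>M)"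
  proof (rule nn_integral_cong_AE)
    show "AE x in M. epowr (Mx x) q = ennreal (mr x powr q)"
      using AE_fin by eventually_elim (simp add: epowr_def mr_def)
  qed
  also have "\<dots> = ennreal (\<integral>x. mr x powr q \<partial>M)"
    by (intro nn_integral_eq_integral i1) auto
  finally show "(\<integral>\<^sup>+x. epowr (Mx x) q \<partial>M) = ennreal (\<integral>x. mr x powr q \<partial>M)" .
qed

end

lemma pw_stab:
  fixes q \<delta> \<kappa> m p :: real
  assumes q: "0 < q" "q < 1" and m: "0 < m" and p: "0 \<le> p" and k: "0 < \<kappa>"
    and st: "\<forall>r\<ge>0. \<bar>1-r\<bar> powr q \<le> \<delta> powr q + (1 - q + q*r - r powr q)/\<kappa>"
  shows "\<bar>m - p\<bar> powr q \<le> \<delta> powr q * m powr q + ((1-q) * m powr q + q * p * m powr (q-1) - p powr q) / \<kappa>"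
proof -
  define r where "r = p / m"
  have r0: "0 \<le> r" using m p by (simp add: r_def)
  have "\<bar>m - p\<bar> = m * \<bar>1 - r\<bar>" using m by (simp add: r_def field_simps abs_mult[symmetric])
  then have "\<bar>m - p\<bar> powr q = m powr q * \<bar>1 - r\<bar> powr q" using m by (simp add: powr_mult)
  also have "\<dots> \<le> m powr q * (\<delta> powr q + (1 - q + q*r - r powr q)/\<kappa>)"
    using st r0 by (intro mult_left_mono) auto
  also have "m powr q * (1 - q + q*r - r powr q) = (1-q) * m powr q + q * p * m powr (q-1) - p powr q"
  proof -
    have "m powr q * r = p * m powr (q-1)" using m
      by (simp add: r_def powr_diff field_simps)
    moreover have "m powr q * r powr q = p powr q" using m p by (simp add: r_def powr_divide)
    ultimately show ?thesis by (simp add: algebra_simps)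
  qed
  then have "m powr q * (\<delta> powr q + (1 - q + q*r - r powr q)/\<kappa>) = \<delta> powr q * m powr q + ((1-q) * m powr q + q * p * m powr (q-1) - p powr q) / \<kappa>"
    by (simp add: algebra_simps add_divide_distrib[symmetric] times_divide_eq_right[symmetric])
  finally show ?thesis .
qed

lemma core:
  fixes A B Q :: "nat \<Rightarrow> real" and q h f y :: real
  assumes q: "0 < q" "q < 1" and y: "1 \<le> y" and h: "0 < h"
    and key: "f powr q = h * ((1-q) * y powr q + q * y powr (q-1))"
    and H1: "\<And>n. \<bar>A n - h * y powr q\<bar> \<le> Q n"
    and H2: "\<And>\<delta>. 0 < \<delta> \<Longrightarrow> \<delta> < 1 \<Longrightarrow> \<exists>\<kappa>>0. \<forall>n. Q n \<le> \<delta> powr q * A n + ((1-q) * A n + q * y * B n - y powr q * h) / \<kappa>"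
    and H3: "\<And>n. (1-q) * A n + q * B n \<le> f powr q" "\<And>n. 0 \<le> A n" "\<And>n. 0 \<le> B n" "\<And>n. 0 \<le> Q n"
  shows "(A \<longlonglongrightarrow> h * y powr q) \<longleftrightarrow> (Q \<longlonglongrightarrow> 0)"
proof
  assume Q: "Q \<longlonglongrightarrow> 0"
  have "(\<lambda>n. A n - h * y powr q) \<longlonglongrightarrow> 0"
    by (rule Lim_null_comparison[OF _ Q]) (use H1 in auto)
  then show "A \<longlonglongrightarrow> h * y powr q" by (simp add: LIM_zero_iff)
next
  assume A: "A \<longlonglongrightarrow> h * y powr q"
  define K where "K = f powr q / (1-q) + 1"
  have "f powr q / (1-q) \<ge> 0" using q by simp
  then have K0: "K > 0" by (simp add: K_def)
  have AK: "A n < K" for n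
  proof -
    have "(1-q) * A n \<le> f powr q" using H3(1)[of n] H3(3)[of n] q by (smt (verit) mult_nonneg_nonneg)
    then have "A n \<le> f powr q / (1-q)" using q by (simp add: field_simps)
    then show ?thesis by (simp add: K_def)
  qed
  define E where "E a = (1-q) * a + y * (f powr q - (1-q) * a) - y powr q * h" for a
  have E0: "E (h * y powr q) = 0"
  proof -
    have "y * y powr (q-1) = y powr q" using y powr_add[of y 1 "q-1"] by simp
    then show ?thesis unfolding E_def key by (simp add: algebra_simps)
  qed
  have EA: "(\<lambda>n. E (A n)) \<longlonglongrightarrow> 0"
    unfolding E0[symmetric] E_def by (intro tendsto_intros A)
  have eB: "(1-q) * A n + q * y * B n - y powr q * h \<le> E (A n)" for n
  proof -
    have "q * B n \<le> f powr q - (1-q) * A n" using H3(1)[of n] by simp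
    then have "y * (q * B n) \<le> y * (f powr q - (1-q) * A n)" using y by (intro mult_left_mono) auto
    then show ?thesis unfolding E_def by (simp add: algebra_simps)
  qed
  show "Q \<longlonglongrightarrow> 0"
  proof (rule LIMSEQ_I)
    fix \<epsilon> :: real assume e: "0 < \<epsilon>"
    define \<delta> where "\<delta> = min (1/2) ((\<epsilon>/(2*K)) powr (1/q))"
    have d0: "0 < \<delta>" "\<delta> < 1" using e K0 by (auto simp: \<delta>_def)
    have "\<delta> powr q \<le> ((\<epsilon>/(2*K)) powr (1/q)) powr q"
      using d0 q by (intro powr_mono2) (auto simp: \<delta>_def)
    also have "\<dots> = \<epsilon>/(2*K)" using q e K0 by (simp add: powr_powr)
    finally have dK: "\<delta> powr q * K \<le> \<epsilon>/2" using K0 by (simp add: field_simps)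
    obtain \<kappa> where k: "\<kappa> > 0" and Qb: "\<And>n. Q n \<le> \<delta> powr q * A n + ((1-q) * A n + q * y * B n - y powr q * h) / \<kappa>"
      using H2[OF d0] by blast
    have "\<kappa> * \<epsilon> / 2 > 0" using k e by simp
    then obtain N where N: "\<And>n. n \<ge> N \<Longrightarrow> norm (E (A n) - 0) < \<kappa> * \<epsilon> / 2"
      using LIMSEQ_D[OF EA] by blast
    show "\<exists>no. \<forall>n\<ge>no. norm (Q n - 0) < \<epsilon>"
    proof (intro exI allI impI)
      fix n assume n: "N \<le> n"
      have "\<delta> powr q * A n \<le> \<delta> powr q * K" using AK[of n] by (intro mult_left_mono) auto
      moreover have "((1-q) * A n + q * y * B n - y powr q * h) / \<kappa> \<le> E (A n) / \<kappa>"
        using eB[of n] k by (intro divide_right_mono) auto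
      moreover have "E (A n) / \<kappa> < \<epsilon> / 2" using N[OF n] k by (simp add: field_simps)
      ultimately have "Q n < \<epsilon>" using Qb[of n] dK by linarith
      then show "norm (Q n - 0) < \<epsilon>" using H3(4)[of n] by simp
    qed
  qed
qed


theorem theorem2:
  fixes M :: "'a measure" and T :: "'a set set" and q f h c :: real
    and \<phi> :: "nat \<Rightarrow> 'a \<Rightarrow> real"
  assumes "prob_space M" and "non_atomic M" and "is_tree M T"
    and "0 < q" and "q < 1"
    and "0 < h" and "h \<le> f powr q"
    and "\<And>n. \<phi> n \<in> borel_measurable M"
    and "\<And>n x. x \<in> space M \<Longrightarrow> 0 \<le> \<phi> n x"
    and "\<And>n. integrable M (\<phi> n)" and "\<And>n. (\<integral>x. \<phi> n x \<partial>M) = f"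
    and "\<And>n. integrable M (\<lambda>x. \<phi> n x powr q)" and "\<And>n. (\<integral>x. \<phi> n x powr q \<partial>M) = h"
    and "c = omega q (f powr q / h) powr (1 / q)"
  shows "((\<lambda>n. \<integral>\<^sup>+ x. epowr (dyadic_max M T (\<phi> n) x) q \<partial>M)
            \<longlonglongrightarrow> ennreal (h * omega q (f powr q / h)))
     \<longleftrightarrow> ((\<lambda>n. \<integral>\<^sup>+ x. (if dyadic_max M T (\<phi> n) x = \<infinity> then \<infinity>
                else ennreal (\<bar>enn2real (dyadic_max M T (\<phi> n) x) - c * \<phi> n x\<bar> powr q)) \<partial>M)
            \<longlonglongrightarrow> 0)"
proof -
  note q = assms(4,5)
  note phi_meas[measurable] = assms(8)
  note phi_nn = assms(9)
  from assms(3) obtain C where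
    Tsets: "T \<subseteq> sets M" and Tpos: "\<forall>I\<in>T. 0 < measure M I"
    and Cp: "\<forall>I\<in>T. C I \<subseteq> T \<and> countable (C I) \<and> (\<exists>J\<in>C I. \<exists>K\<in>C I. J \<noteq> K) \<and> disjoint (C I) \<and> \<Union>(C I) = I"
    and Teq: "T = (\<Union>m. tree_level M C m)"
    unfolding is_tree_def by blast
  have TS: "tree_setup M C T"
    unfolding tree_setup_def tree_setup_axioms_def using assms(1) Tsets Tpos Cp Teq by blast
  have f0: "0 \<le> f" unfolding assms(11)[of 0, symmetric]
    using phi_nn[of _ 0] by (intro integral_nonneg_AE AE_I2) auto
  have fpos: "0 < f"
  proof (rule ccontr)
    assume "\<not> 0 < f"
    then have "f = 0" using f0 by simp
    then show False using assms(6,7) by simp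
  qed
  have TF: "tree_fun M C T (\<phi> n) q" for n
    unfolding tree_fun_def tree_fun_axioms_def using TS assms fpos by auto
  define mr where "mr n x = enn2real (dyadic_max M T (\<phi> n) x)" for n x
  define A where "A n = (\<integral>x. mr n x powr q \<partial>M)" for n
  define B where "B n = (\<integral>x. \<phi> n x * mr n x powr (q-1) \<partial>M)" for n
  have AEfin: "AE x in M. dyadic_max M T (\<phi> n) x \<noteq> \<infinity>" for n
  proof -
    interpret TF: tree_fun M C T "\<phi> n" q by (rule TF)
    show ?thesis by (rule TF.AE_fin)
  qed
  have mr_meas[measurable]: "mr n \<in> borel_measurable M" for n
  proof -
    interpret TF: tree_fun M C T "\<phi> n" q by (rule TF)
    show ?thesis using TF.mr_meas by (simp add: TF.mr_def mr_def[abs_def])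
  qed
  have mr_ge: "\<And>x. x \<in> space M \<Longrightarrow> dyadic_max M T (\<phi> n) x \<noteq> \<infinity> \<Longrightarrow> f \<le> mr n x" for n
  proof -
    interpret TF: tree_fun M C T "\<phi> n" q by (rule TF)
    show "\<And>x. x \<in> space M \<Longrightarrow> dyadic_max M T (\<phi> n) x \<noteq> \<infinity> \<Longrightarrow> f \<le> mr n x"
      using TF.mr_ge assms(11) by (simp add: TF.mr_def mr_def)
  qed
  have mr_nn: "0 \<le> mr n x" for n x by (simp add: mr_def)
  have i1: "integrable M (\<lambda>x. mr n x powr q)" and i2: "integrable M (\<lambda>x. \<phi> n x * mr n x powr (q-1))"
    and ineq: "(1-q) * A n + q * B n \<le> f powr q"
    and nnA: "(\<integral>\<^sup>+x. epowr (dyadic_max M T (\<phi> n) x) q \<partial>M) = ennreal (A n)" for n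
  proof -
    interpret TF: tree_fun M C T "\<phi> n" q by (rule TF)
    have e: "TF.mr = mr n" by (simp add: fun_eq_iff TF.mr_def mr_def)
    show "integrable M (\<lambda>x. mr n x powr q)" using TF.tree_final(1) unfolding e .
    show "integrable M (\<lambda>x. \<phi> n x * mr n x powr (q-1))" using TF.tree_final(2) unfolding e .
    show "(1-q) * A n + q * B n \<le> f powr q" using TF.tree_final(3) unfolding e A_def B_def assms(11) .
    show "(\<integral>\<^sup>+x. epowr (dyadic_max M T (\<phi> n) x) q \<partial>M) = ennreal (A n)"
      using TF.tree_final(4) unfolding e A_def .
  qed
  define z where "z = f powr q / h"
  have z1: "1 \<le> z" using assms(6,7) by (simp add: z_def)
  define y where "y = H_inv q z"
  have y1: "1 \<le> y" and Hy: "H_fun q y = z" using H_inv_props[OF q z1] by (auto simp: y_def)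
  have om: "omega q (f powr q / h) = y powr q" by (simp add: omega_def y_def z_def)
  have cy: "c = y" using assms(14) y1 q by (simp add: om powr_powr)
  have key: "f powr q = h * ((1-q) * y powr q + q * y powr (q-1))"
    using Hy assms(6) by (simp add: H_fun_def z_def field_simps)
  define Q where "Q n = (\<integral>x. \<bar>mr n x - y * \<phi> n x\<bar> powr q \<partial>M)" for n
  have i3: "integrable M (\<lambda>x. mr n x powr q + y powr q * \<phi> n x powr q)" for n
    using i1 assms(12) by (intro Bochner_Integration.integrable_add integrable_mult_right) auto
  have pb: "\<bar>mr n x - y * \<phi> n x\<bar> powr q \<le> mr n x powr q + y powr q * \<phi> n x powr q" if x: "x \<in> space M" for n x
  proof -
    have yp: "0 \<le> y * \<phi> n x" using y1 phi_nn[OF x] by simp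
    have "\<bar>mr n x - y * \<phi> n x\<bar> powr q \<le> (mr n x + y * \<phi> n x) powr q"
      using q yp mr_nn[of n x] by (intro powr_mono2) auto
    also have "\<dots> \<le> mr n x powr q + (y * \<phi> n x) powr q"
      using q yp mr_nn[of n x] by (intro subadd_q) auto
    finally show ?thesis using y1 phi_nn[OF x] by (simp add: powr_mult)
  qed
  have Qint: "integrable M (\<lambda>x. \<bar>mr n x - y * \<phi> n x\<bar> powr q)" for n
  proof (rule Bochner_Integration.integrable_bound[OF i3])
    show "AE x in M. norm (\<bar>mr n x - y * \<phi> n x\<bar> powr q) \<le> norm (mr n x powr q + y powr q * \<phi> n x powr q)"
      using pb by (intro AE_I2) auto
  qed simp
  have H1: "\<bar>A n - h * y powr q\<bar> \<le> Q n" for n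
  proof -
    let ?g = "\<lambda>x. mr n x powr q - y powr q * \<phi> n x powr q"
    have gi: "integrable M ?g"
      by (rule Bochner_Integration.integrable_diff[OF i1 integrable_mult_right[OF assms(12)]])
    have "(\<integral>x. ?g x \<partial>M) = A n - y powr q * h"
      unfolding A_def using Bochner_Integration.integral_diff[OF i1 integrable_mult_right[OF assms(12)]]
      by (simp add: assms(13))
    then have e1: "A n - h * y powr q = (\<integral>x. ?g x \<partial>M)" by simp
    have "norm (\<integral>x. ?g x \<partial>M) \<le> (\<integral>x. norm (?g x) \<partial>M)"
      by (rule Bochner_Integration.integral_norm_bound)
    then have e2: "\<bar>\<integral>x. ?g x \<partial>M\<bar> \<le> (\<integral>x. norm (?g x) \<partial>M)" by (simp only: real_norm_def)
    have e3: "(\<integral>x. norm (?g x) \<partial>M) \<le> Q n" unfolding Q_def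
    proof (rule integral_mono)
      show "integrable M (\<lambda>x. norm (?g x))" by (rule integrable_norm[OF gi])
      show "integrable M (\<lambda>x. \<bar>mr n x - y * \<phi> n x\<bar> powr q)" by (rule Qint)
      fix x assume x: "x \<in> space M"
      have "y powr q * \<phi> n x powr q = (y * \<phi> n x) powr q" using y1 phi_nn[OF x] by (simp add: powr_mult)
      moreover have "\<bar>mr n x powr q - (y * \<phi> n x) powr q\<bar> \<le> \<bar>mr n x - y * \<phi> n x\<bar> powr q"
        using q y1 phi_nn[OF x] by (intro absdiff_q) (auto simp: mr_nn)
      ultimately show "norm (?g x) \<le> \<bar>mr n x - y * \<phi> n x\<bar> powr q" by (simp only: real_norm_def)
    qed
    show ?thesis unfolding e1 using e2 e3 by linarith
  qed
  have H2: "\<exists>\<kappa>>0. \<forall>n. Q n \<le> \<delta> powr q * A n + ((1-q) * A n + q * y * B n - y powr q * h) / \<kappa>"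
    if d: "0 < \<delta>" "\<delta> < 1" for \<delta>
  proof -
    obtain \<kappa> where k: "\<kappa> > 0" and st: "\<forall>r\<ge>0. \<bar>1-r\<bar> powr q \<le> \<delta> powr q + (1 - q + q*r - r powr q)/\<kappa>"
      using stab_q[OF q d] by blast
    show ?thesis
    proof (intro exI[of _ \<kappa>] conjI allI k)
      fix n
      let ?R = "\<lambda>x. \<delta> powr q * mr n x powr q + ((1-q) * mr n x powr q + q * y * (\<phi> n x * mr n x powr (q-1)) - y powr q * \<phi> n x powr q) / \<kappa>"
      have Rint: "integrable M ?R"
        using i1 i2 assms(12)
        by (intro Bochner_Integration.integrable_add Bochner_Integration.integrable_diff integrable_mult_right integrable_divide_zero) auto
      have "Q n \<le> (\<integral>x. ?R x \<partial>M)" unfolding Q_def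
      proof (rule integral_mono_AE[OF Qint Rint])
        show "AE x in M. \<bar>mr n x - y * \<phi> n x\<bar> powr q \<le> ?R x"
          using AEfin[of n] AE_space
        proof eventually_elim
          case (elim x)
          then have x: "x \<in> space M" and fin: "dyadic_max M T (\<phi> n) x \<noteq> \<infinity>" by auto
          have m0: "0 < mr n x" using mr_ge[OF x fin] fpos by simp
          have yp: "0 \<le> y * \<phi> n x" using y1 phi_nn[OF x] by simp
          have "\<bar>mr n x - y * \<phi> n x\<bar> powr q \<le> \<delta> powr q * mr n x powr q + ((1-q) * mr n x powr q + q * (y * \<phi> n x) * mr n x powr (q-1) - (y * \<phi> n x) powr q) / \<kappa>"
            by (rule pw_stab[OF q m0 yp k st])
          also have "\<dots> = ?R x" using y1 phi_nn[OF x] by (simp add: powr_mult mult_ac)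
          finally show ?case .
        qed
      qed
      also have "(\<integral>x. ?R x \<partial>M) = \<delta> powr q * A n + ((1-q) * A n + q * y * B n - y powr q * h) / \<kappa>"
        using i1 i2 assms(12)
        by (simp add: A_def B_def assms(13) Bochner_Integration.integral_add Bochner_Integration.integral_diff)
      finally show "Q n \<le> \<delta> powr q * A n + ((1-q) * A n + q * y * B n - y powr q * h) / \<kappa>" .
    qed
  qed
  have A0: "0 \<le> A n" for n unfolding A_def by (intro integral_nonneg_AE AE_I2) auto
  have B0: "0 \<le> B n" for n unfolding B_def using phi_nn by (intro integral_nonneg_AE AE_I2) auto
  have Q0: "0 \<le> Q n" for n unfolding Q_def by (intro integral_nonneg_AE AE_I2) auto
  have core_eq: "(A \<longlonglongrightarrow> h * y powr q) \<longleftrightarrow> (Q \<longlonglongrightarrow> 0)"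
    by (rule core[OF q y1 assms(6) key H1 H2 ineq A0 B0 Q0])
  have L: "((\<lambda>n. \<integral>\<^sup>+ x. epowr (dyadic_max M T (\<phi> n) x) q \<partial>M) \<longlonglongrightarrow> ennreal (h * omega q (f powr q / h)))
        \<longleftrightarrow> (A \<longlonglongrightarrow> h * y powr q)"
    unfolding nnA om using A0 assms(6) by (intro tendsto_ennreal_iff) auto
  have nnQ: "(\<integral>\<^sup>+ x. (if dyadic_max M T (\<phi> n) x = \<infinity> then \<infinity>
                else ennreal (\<bar>enn2real (dyadic_max M T (\<phi> n) x) - c * \<phi> n x\<bar> powr q)) \<partial>M) = ennreal (Q n)" for n
  proof -
    have "(\<integral>\<^sup>+ x. (if dyadic_max M T (\<phi> n) x = \<infinity> then \<infinity>
                else ennreal (\<bar>enn2real (dyadic_max M T (\<phi> n) x) - c * \<phi> n x\<bar> powr q)) \<partial>M)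
        = (\<integral>\<^sup>+ x. ennreal (\<bar>mr n x - y * \<phi> n x\<bar> powr q) \<partial>M)"
      using AEfin[of n] by (intro nn_integral_cong_AE) (auto simp: mr_def cy)
    also have "\<dots> = ennreal (Q n)" unfolding Q_def by (intro nn_integral_eq_integral Qint) auto
    finally show ?thesis .
  qed
  have R: "((\<lambda>n. \<integral>\<^sup>+ x. (if dyadic_max M T (\<phi> n) x = \<infinity> then \<infinity>
                else ennreal (\<bar>enn2real (dyadic_max M T (\<phi> n) x) - c * \<phi> n x\<bar> powr q)) \<partial>M) \<longlonglongrightarrow> 0)
        \<longleftrightarrow> (Q \<longlonglongrightarrow> 0)"
    unfolding nnQ using Q0 tendsto_ennreal_iff[of Q sequentially 0] by (simp add: ennreal_0[symmetric] del: ennreal_0)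
  show ?thesis using L R core_eq by simp
qed


end
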